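(* Let $B$ be a finite skew brace, regarded as a q-cycle set via $a\cdot b:=\lambda_{a^-}(b)$ and $a:b:=\delta_{a^-}(b)$, and let $X$ be an indecomposable sub-q-cycle set of $B$. Then: (1) for $x\in X$, we have $B=B(x)$ if and only if $X$ is a transitive cycle base of $B$ and $\langle x\rangle = X$; (2) $B=B(x)$ for all $x\in X$ if and only if $X$ is a transitive cycle base of $B$ and $X$ is irreducible.
   Context: A skew brace is a triple $(B,+,\circ)$ where $(B,+)$ and $(B,\circ)$ are groups and $a\circ(b+c)=a\circ b-a+a\circ c$ for all $a,b,c\in B$; $-a$ and $a^-$ denote the inverses of $a$ in $(B,+)$ and $(B,\circ)$. For $a\in B$ put $\lambda_a(b):=-a+a\circ b$ and $\delta_a(b):=a\circ b-a$. A sub-skew brace is a subset that is a subgroup of both $(B,+)$ and $(B,\circ)$; $B(x)$ denotes the smallest sub-skew brace of $B$ containing $x$. A q-cycle set is a non-empty set $X$ with binary operations $\cdot$ and $:$ such that each map $\sigma_x:y\mapsto x\cdot y$ is bijective and, for all $x,y,z$: $(x\cdot y)\cdot(x\cdot z)=(y:x)\cdot(y\cdot z)$, $(x:y):(x:z)=(y\cdot x):(y:z)$, $(x\cdot y):(x\cdot z)=(y:x)\cdot(y:z)$. Write $\delta_x(y):=x:y$ (for the skew brace $B$, the q-cycle set maps are $\sigma_a=\lambda_{a^-}$ and $\delta_{a^-}$). A sub-q-cycle set is a subset that is again a q-cycle set under the restricted operations (the empty set also counts as one). For $S\subseteq X$, $\langle S\rangle$ is the intersection of all sub-q-cycle sets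 containing $S$, and $\langle x\rangle:=\langle\{x\}\rangle$. $X$ is irreducible if $\emptyset$ and $X$ are its only sub-q-cycle sets. $X$ is indecomposable if there is no partition of $X$ into two nonempty sub-q-cycle sets (for finite $X$ this is equivalent to the group generated by all $\sigma_x,\delta_x$ acting transitively on $X$). A subset $X\subseteq B$ is a cycle base of $B$ if it is a union of orbits of the subgroup of $\mathrm{Sym}(B)$ generated by $\{\lambda_a,\delta_a : a\in B\}$ and it generates $(B,+)$; it is a transitive cycle base if it is a single such orbit. *)

theory Defs
  imports "HOL-Algebra.Generated_Groups"
begin

text \<open>A skew brace is given by two group structures A = (B,+) and M = (B,\<circ>) on the
same carrier B (HOL-Algebra records; the group operation of A is the addition, written
with the multiplication symbol of A).\<close>

definition skew_brace :: "'a monoid \<Rightarrow> 'a monoid \<Rightarrow> bool" where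
  "skew_brace A M \<longleftrightarrow> group A \<and> group M \<and> carrier A = carrier M \<and>
     (\<forall>a\<in>carrier A. \<forall>b\<in>carrier A. \<forall>c\<in>carrier A.
        a \<otimes>\<^bsub>M\<^esub> (b \<otimes>\<^bsub>A\<^esub> c)
          = (a \<otimes>\<^bsub>M\<^esub> b) \<otimes>\<^bsub>A\<^esub> inv\<^bsub>A\<^esub> a \<otimes>\<^bsub>A\<^esub> (a \<otimes>\<^bsub>M\<^esub> c))"

definition blambda :: "'a monoid \<Rightarrow> 'a monoid \<Rightarrow> 'a \<Rightarrow> 'a \<Rightarrow> 'a" where
  "blambda A M a b = inv\<^bsub>A\<^esub> a \<otimes>\<^bsub>A\<^esub> (a \<otimes>\<^bsub>M\<^esub> b)"

definition bdelta :: "'a monoid \<Rightarrow> 'a monoid \<Rightarrow> 'a \<Rightarrow> 'a \<Rightarrow> 'a" where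
  "bdelta A M a b = (a \<otimes>\<^bsub>M\<^esub> b) \<otimes>\<^bsub>A\<^esub> inv\<^bsub>A\<^esub> a"

definition sub_skew_brace :: "'a monoid \<Rightarrow> 'a monoid \<Rightarrow> 'a set \<Rightarrow> bool" where
  "sub_skew_brace A M C \<longleftrightarrow> subgroup C A \<and> subgroup C M"

definition sub_skew_brace_gen :: "'a monoid \<Rightarrow> 'a monoid \<Rightarrow> 'a \<Rightarrow> 'a set" where
  "sub_skew_brace_gen A M x = \<Inter>{C. sub_skew_brace A M C \<and> x \<in> C}"

text \<open>One generating step of the action of the group generated by all lambda_a, delta_a
(a generator or the inverse of a generator).\<close>
definition cb_step :: "'a monoid \<Rightarrow> 'a monoid \<Rightarrow> ('a \<times> 'a) set" where
  "cb_step A M = {(u, v). u \<in> carrier A \<and> v \<in> carrier A \<and>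
      (\<exists>c\<in>carrier A. v = blambda A M c u \<or> v = bdelta A M c u
                   \<or> u = blambda A M c v \<or> u = bdelta A M c v)}"

definition cb_orbit :: "'a monoid \<Rightarrow> 'a monoid \<Rightarrow> 'a \<Rightarrow> 'a set" where
  "cb_orbit A M u = {v. (u, v) \<in> (cb_step A M)\<^sup>*}"

definition cycle_base :: "'a monoid \<Rightarrow> 'a monoid \<Rightarrow> 'a set \<Rightarrow> bool" where
  "cycle_base A M X \<longleftrightarrow> X \<subseteq> carrier A \<and> (\<forall>u\<in>X. cb_orbit A M u \<subseteq> X)
     \<and> generate A X = carrier A"

definition transitive_cycle_base :: "'a monoid \<Rightarrow> 'a monoid \<Rightarrow> 'a set \<Rightarrow> bool" where
  "transitive_cycle_base A M X \<longleftrightarrow> (\<exists>u\<in>carrier A. X = cb_orbit A M u)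
     \<and> generate A X = carrier A"

definition q_cycle_set :: "'a set \<Rightarrow> ('a \<Rightarrow> 'a \<Rightarrow> 'a) \<Rightarrow> ('a \<Rightarrow> 'a \<Rightarrow> 'a) \<Rightarrow> bool" where
  "q_cycle_set X dt cl \<longleftrightarrow> X \<noteq> {} \<and>
     (\<forall>x\<in>X. \<forall>y\<in>X. dt x y \<in> X \<and> cl x y \<in> X) \<and>
     (\<forall>x\<in>X. bij_betw (dt x) X X) \<and>
     (\<forall>x\<in>X. \<forall>y\<in>X. \<forall>z\<in>X.
        dt (dt x y) (dt x z) = dt (cl y x) (dt y z) \<and>
        cl (cl x y) (cl x z) = cl (dt y x) (cl y z) \<and>
        cl (dt x y) (dt x z) = dt (cl y x) (cl y z))"

definition sub_qcs :: "'a set \<Rightarrow> ('a \<Rightarrow> 'a \<Rightarrow> 'a) \<Rightarrow> ('a \<Rightarrow> 'a \<Rightarrow> 'a) \<Rightarrow> 'a set \<Rightarrow> bool" where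
  "sub_qcs X dt cl S \<longleftrightarrow> S \<subseteq> X \<and> (S = {} \<or> q_cycle_set S dt cl)"

definition qcs_gen :: "'a set \<Rightarrow> ('a \<Rightarrow> 'a \<Rightarrow> 'a) \<Rightarrow> ('a \<Rightarrow> 'a \<Rightarrow> 'a) \<Rightarrow> 'a set \<Rightarrow> 'a set" where
  "qcs_gen X dt cl S = \<Inter>{Y. sub_qcs X dt cl Y \<and> S \<subseteq> Y}"

definition qcs_irreducible :: "'a set \<Rightarrow> ('a \<Rightarrow> 'a \<Rightarrow> 'a) \<Rightarrow> ('a \<Rightarrow> 'a \<Rightarrow> 'a) \<Rightarrow> bool" where
  "qcs_irreducible X dt cl \<longleftrightarrow> q_cycle_set X dt cl \<and>
     (\<forall>Y. sub_qcs X dt cl Y \<longrightarrow> Y = {} \<or> Y = X)"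

definition qcs_indecomposable :: "'a set \<Rightarrow> ('a \<Rightarrow> 'a \<Rightarrow> 'a) \<Rightarrow> ('a \<Rightarrow> 'a \<Rightarrow> 'a) \<Rightarrow> bool" where
  "qcs_indecomposable X dt cl \<longleftrightarrow> q_cycle_set X dt cl \<and>
     \<not> (\<exists>Y Z. Y \<noteq> {} \<and> Z \<noteq> {} \<and> Y \<inter> Z = {} \<and> Y \<union> Z = X \<and>
            sub_qcs X dt cl Y \<and> sub_qcs X dt cl Z)"

definition sb_dot :: "'a monoid \<Rightarrow> 'a monoid \<Rightarrow> 'a \<Rightarrow> 'a \<Rightarrow> 'a" where
  "sb_dot A M a b = blambda A M (inv\<^bsub>M\<^esub> a) b"

definition sb_col :: "'a monoid \<Rightarrow> 'a monoid \<Rightarrow> 'a \<Rightarrow> 'a \<Rightarrow> 'a" where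
  "sb_col A M a b = bdelta A M (inv\<^bsub>M\<^esub> a) b"

end

theory Submission
  imports Defs "HOL-Algebra.Multiplicative_Group"
begin


lemma (in group) fin_closed_subgroup:
  assumes fin: "finite (carrier G)" and sub: "H \<subseteq> carrier G" and one: "\<one> \<in> H"
    and mul: "\<And>a b. a \<in> H \<Longrightarrow> b \<in> H \<Longrightarrow> a \<otimes> b \<in> H"
  shows "subgroup H G"
proof (rule subgroupI[OF sub])
  show "H \<noteq> {}" using one by blast
  show "a \<otimes> b \<in> H" if "a \<in> H" "b \<in> H" for a b using mul that .
  fix a assume a: "a \<in> H"
  have pw: "a [^] (n::nat) \<in> H" for n
    by (induction n) (use one mul a in auto)
  have ac: "a \<in> carrier G" using a sub by blast
  have "order G > 0" unfolding order_def using fin one_closed by (auto simp: card_gt_0_iff)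
  then obtain k where k: "order G = Suc k" using gr0_implies_Suc by blast
  have "a [^] k \<otimes> a = \<one>" using pow_order_eq_1[OF ac] k by (simp add: nat_pow_Suc)
  then have "inv a = a [^] k" using ac by (simp add: inv_equality)
  then show "inv a \<in> H" using pw by simp
qed



locale SB =
  fixes A M :: "'a monoid"
  assumes sb: "skew_brace A M"
begin

sublocale GA: group A using sb unfolding skew_brace_def by blast
sublocale GM: group M using sb unfolding skew_brace_def by blast

lemma carrM: "carrier M = carrier A" using sb unfolding skew_brace_def by blast

lemma dist: "a \<in> carrier A \<Longrightarrow> b \<in> carrier A \<Longrightarrow> c \<in> carrier A \<Longrightarrow>
   a \<otimes>\<^bsub>M\<^esub> (b \<otimes>\<^bsub>A\<^esub> c)
          = (a \<otimes>\<^bsub>M\<^esub> b) \<otimes>\<^bsub>A\<^esub> inv\<^bsub>A\<^esub> a \<otimes>\<^bsub>A\<^esub> (a \<otimes>\<^bsub>M\<^esub> c)"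
  using sb unfolding skew_brace_def by blast

lemma Mc[simp]: "a \<in> carrier A \<Longrightarrow> b \<in> carrier A \<Longrightarrow> a \<otimes>\<^bsub>M\<^esub> b \<in> carrier A"
  using GM.m_closed carrM by blast
lemma Mi[simp]: "a \<in> carrier A \<Longrightarrow> inv\<^bsub>M\<^esub> a \<in> carrier A"
  using GM.inv_closed carrM by blast

lemma one_eq: "\<one>\<^bsub>M\<^esub> = \<one>\<^bsub>A\<^esub>"
proof -
  have c: "\<one>\<^bsub>M\<^esub> \<in> carrier A" using carrM by force
  have "\<one>\<^bsub>M\<^esub> \<otimes>\<^bsub>M\<^esub> (\<one>\<^bsub>A\<^esub> \<otimes>\<^bsub>A\<^esub> \<one>\<^bsub>A\<^esub>) = 
     (\<one>\<^bsub>M\<^esub> \<otimes>\<^bsub>M\<^esub> \<one>\<^bsub>A\<^esub>) \<otimes>\<^bsub>A\<^esub> inv\<^bsub>A\<^esub> \<one>\<^bsub>M\<^esub> \<otimes>\<^bsub>A\<^esub> (\<one>\<^bsub>M\<^esub> \<otimes>\<^bsub>M\<^esub> \<one>\<^bsub>A\<^esub>)"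
    using dist[OF c, of "\<one>\<^bsub>A\<^esub>" "\<one>\<^bsub>A\<^esub>"] by simp
  then have "inv\<^bsub>A\<^esub> \<one>\<^bsub>M\<^esub> = \<one>\<^bsub>A\<^esub>" using c carrM GM.l_one[of "\<one>\<^bsub>A\<^esub>"] by simp
  then show ?thesis using c GA.inv_inv[of "\<one>\<^bsub>M\<^esub>"] by simp
qed

lemma one_M_r[simp]: "a \<in> carrier A \<Longrightarrow> a \<otimes>\<^bsub>M\<^esub> \<one>\<^bsub>A\<^esub> = a"
  using GM.r_one[of a] one_eq carrM by simp
lemma one_M_l[simp]: "a \<in> carrier A \<Longrightarrow> \<one>\<^bsub>A\<^esub> \<otimes>\<^bsub>M\<^esub> a = a"
  using GM.l_one[of a] one_eq carrM by simp
lemma M_rinv[simp]: "a \<in> carrier A \<Longrightarrow> a \<otimes>\<^bsub>M\<^esub> inv\<^bsub>M\<^esub> a = \<one>\<^bsub>A\<^esub>"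
  using GM.r_inv[of a] one_eq carrM by simp
lemma M_linv[simp]: "a \<in> carrier A \<Longrightarrow> inv\<^bsub>M\<^esub> a \<otimes>\<^bsub>M\<^esub> a = \<one>\<^bsub>A\<^esub>"
  using GM.l_inv[of a] one_eq carrM by simp
lemma M_assoc: "a \<in> carrier A \<Longrightarrow> b \<in> carrier A \<Longrightarrow> c \<in> carrier A \<Longrightarrow>
   (a \<otimes>\<^bsub>M\<^esub> b) \<otimes>\<^bsub>M\<^esub> c = a \<otimes>\<^bsub>M\<^esub> (b \<otimes>\<^bsub>M\<^esub> c)"
  using GM.m_assoc[of a b c] carrM by simp

abbreviation lam where "lam \<equiv> blambda A M"
abbreviation del where "del \<equiv> bdelta A M"

lemma lam_c[simp]: "a \<in> carrier A \<Longrightarrow> b \<in> carrier A \<Longrightarrow> lam a b \<in> carrier A"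
  by (simp add: blambda_def)
lemma del_c[simp]: "a \<in> carrier A \<Longrightarrow> b \<in> carrier A \<Longrightarrow> del a b \<in> carrier A"
  by (simp add: bdelta_def)

lemma lam_hom: "a \<in> carrier A \<Longrightarrow> group_hom A A (lam a)"
  apply (rule group_hom.intro, rule GA.group_axioms, rule GA.group_axioms)
  apply (unfold_locales)
  apply (rule homI)
   apply simp
  apply (simp add: blambda_def dist[of a] GA.m_assoc)
  done

lemma del_hom: "a \<in> carrier A \<Longrightarrow> group_hom A A (del a)"
  apply (rule group_hom.intro, rule GA.group_axioms, rule GA.group_axioms)
  apply (unfold_locales)
  apply (rule homI)
   apply simp
  apply (simp add: bdelta_def dist[of a] GA.m_assoc)
  done

lemma Acanc[simp]: "x \<in> carrier A \<Longrightarrow> y \<in> carrier A \<Longrightarrow> x \<otimes>\<^bsub>A\<^esub> (inv\<^bsub>A\<^esub> x \<otimes>\<^bsub>A\<^esub> y) = y"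
  by (simp add: GA.m_assoc[symmetric])
lemma Acanc2[simp]: "x \<in> carrier A \<Longrightarrow> y \<in> carrier A \<Longrightarrow> inv\<^bsub>A\<^esub> x \<otimes>\<^bsub>A\<^esub> (x \<otimes>\<^bsub>A\<^esub> y) = y"
  by (simp add: GA.m_assoc[symmetric])

lemma lam_mult: "a \<in> carrier A \<Longrightarrow> b \<in> carrier A \<Longrightarrow> c \<in> carrier A \<Longrightarrow>
  lam a (b \<otimes>\<^bsub>A\<^esub> c) = lam a b \<otimes>\<^bsub>A\<^esub> lam a c"
  using group_hom.hom_mult[OF lam_hom] by blast
lemma del_mult: "a \<in> carrier A \<Longrightarrow> b \<in> carrier A \<Longrightarrow> c \<in> carrier A \<Longrightarrow>
  del a (b \<otimes>\<^bsub>A\<^esub> c) = del a b \<otimes>\<^bsub>A\<^esub> del a c"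
  using group_hom.hom_mult[OF del_hom] by blast
lemma lam_inv: "a \<in> carrier A \<Longrightarrow> b \<in> carrier A \<Longrightarrow> lam a (inv\<^bsub>A\<^esub> b) = inv\<^bsub>A\<^esub> lam a b"
  using group_hom.hom_inv[OF lam_hom] by blast
lemma del_inv: "a \<in> carrier A \<Longrightarrow> b \<in> carrier A \<Longrightarrow> del a (inv\<^bsub>A\<^esub> b) = inv\<^bsub>A\<^esub> del a b"
  using group_hom.hom_inv[OF del_hom] by blast
lemma lam_one[simp]: "a \<in> carrier A \<Longrightarrow> lam a \<one>\<^bsub>A\<^esub> = \<one>\<^bsub>A\<^esub>"
  using group_hom.hom_one[OF lam_hom] by blast

lemma lam_comp: "a \<in> carrier A \<Longrightarrow> b \<in> carrier A \<Longrightarrow> c \<in> carrier A \<Longrightarrow>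
  lam a (lam b c) = lam (a \<otimes>\<^bsub>M\<^esub> b) c"
proof -
  assume a: "a \<in> carrier A" and b: "b \<in> carrier A" and c: "c \<in> carrier A"
  have "lam a (lam b c) = lam a (inv\<^bsub>A\<^esub> b) \<otimes>\<^bsub>A\<^esub> lam a (b \<otimes>\<^bsub>M\<^esub> c)"
    unfolding blambda_def[of A M b c] using a b c lam_mult by simp
  also have "\<dots> = inv\<^bsub>A\<^esub> (inv\<^bsub>A\<^esub> a \<otimes>\<^bsub>A\<^esub> (a \<otimes>\<^bsub>M\<^esub> b)) \<otimes>\<^bsub>A\<^esub> (inv\<^bsub>A\<^esub> a \<otimes>\<^bsub>A\<^esub> (a \<otimes>\<^bsub>M\<^esub> (b \<otimes>\<^bsub>M\<^esub> c)))"
    using a b c lam_inv by (simp add: blambda_def)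
  also have "\<dots> = inv\<^bsub>A\<^esub> (a \<otimes>\<^bsub>M\<^esub> b) \<otimes>\<^bsub>A\<^esub> ((a \<otimes>\<^bsub>M\<^esub> b) \<otimes>\<^bsub>M\<^esub> c)"
    using a b c by (simp add: GA.inv_mult_group GA.m_assoc M_assoc)
  finally show ?thesis by (simp add: blambda_def)
qed


lemma del_comp: "a \<in> carrier A \<Longrightarrow> b \<in> carrier A \<Longrightarrow> c \<in> carrier A \<Longrightarrow>
  del a (del b c) = del (a \<otimes>\<^bsub>M\<^esub> b) c"
proof -
  assume a: "a \<in> carrier A" and b: "b \<in> carrier A" and c: "c \<in> carrier A"
  have "del a (del b c) = del a (b \<otimes>\<^bsub>M\<^esub> c) \<otimes>\<^bsub>A\<^esub> del a (inv\<^bsub>A\<^esub> b)"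
    unfolding bdelta_def[of A M b c] using a b c del_mult by simp
  also have "\<dots> = ((a \<otimes>\<^bsub>M\<^esub> (b \<otimes>\<^bsub>M\<^esub> c)) \<otimes>\<^bsub>A\<^esub> inv\<^bsub>A\<^esub> a) \<otimes>\<^bsub>A\<^esub> inv\<^bsub>A\<^esub> ((a \<otimes>\<^bsub>M\<^esub> b) \<otimes>\<^bsub>A\<^esub> inv\<^bsub>A\<^esub> a)"
    using a b c del_inv by (simp add: bdelta_def)
  also have "\<dots> = ((a \<otimes>\<^bsub>M\<^esub> b) \<otimes>\<^bsub>M\<^esub> c) \<otimes>\<^bsub>A\<^esub> inv\<^bsub>A\<^esub> (a \<otimes>\<^bsub>M\<^esub> b)"
    using a b c by (simp add: GA.inv_mult_group GA.m_assoc M_assoc)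
  finally show ?thesis by (simp add: bdelta_def)
qed

lemma lam_1[simp]: "b \<in> carrier A \<Longrightarrow> lam \<one>\<^bsub>A\<^esub> b = b"
  by (simp add: blambda_def)
lemma del_1[simp]: "b \<in> carrier A \<Longrightarrow> del \<one>\<^bsub>A\<^esub> b = b"
  by (simp add: bdelta_def)

lemma lam_inj: "a \<in> carrier A \<Longrightarrow> b \<in> carrier A \<Longrightarrow> c \<in> carrier A \<Longrightarrow> lam a b = lam a c \<Longrightarrow> b = c"
proof -
  assume a: "a \<in> carrier A" and b: "b \<in> carrier A" and c: "c \<in> carrier A" and h: "lam a b = lam a c"
  then have "a \<otimes>\<^bsub>M\<^esub> b = a \<otimes>\<^bsub>M\<^esub> c" by (simp add: blambda_def)
  then have "inv\<^bsub>M\<^esub> a \<otimes>\<^bsub>M\<^esub> (a \<otimes>\<^bsub>M\<^esub> b) = inv\<^bsub>M\<^esub> a \<otimes>\<^bsub>M\<^esub> (a \<otimes>\<^bsub>M\<^esub> c)" by simp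
  then show "b = c" using a b c by (simp add: M_assoc[symmetric])
qed
lemma del_inj: "a \<in> carrier A \<Longrightarrow> b \<in> carrier A \<Longrightarrow> c \<in> carrier A \<Longrightarrow> del a b = del a c \<Longrightarrow> b = c"
proof -
  assume a: "a \<in> carrier A" and b: "b \<in> carrier A" and c: "c \<in> carrier A" and h: "del a b = del a c"
  then have "a \<otimes>\<^bsub>M\<^esub> b = a \<otimes>\<^bsub>M\<^esub> c" by (simp add: bdelta_def)
  then have "inv\<^bsub>M\<^esub> a \<otimes>\<^bsub>M\<^esub> (a \<otimes>\<^bsub>M\<^esub> b) = inv\<^bsub>M\<^esub> a \<otimes>\<^bsub>M\<^esub> (a \<otimes>\<^bsub>M\<^esub> c)" by simp
  then show "b = c" using a b c by (simp add: M_assoc[symmetric])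
qed

lemma lam_inv_l[simp]: "a \<in> carrier A \<Longrightarrow> b \<in> carrier A \<Longrightarrow> lam a (lam (inv\<^bsub>M\<^esub> a) b) = b"
  by (simp add: lam_comp)
lemma lam_inv_r[simp]: "a \<in> carrier A \<Longrightarrow> b \<in> carrier A \<Longrightarrow> lam (inv\<^bsub>M\<^esub> a) (lam a b) = b"
  by (simp add: lam_comp)
lemma del_inv_l[simp]: "a \<in> carrier A \<Longrightarrow> b \<in> carrier A \<Longrightarrow> del a (del (inv\<^bsub>M\<^esub> a) b) = b"
  by (simp add: del_comp)
lemma del_inv_r[simp]: "a \<in> carrier A \<Longrightarrow> b \<in> carrier A \<Longrightarrow> del (inv\<^bsub>M\<^esub> a) (del a b) = b"
  by (simp add: del_comp)

lemma M_as_A: "a \<in> carrier A \<Longrightarrow> b \<in> carrier A \<Longrightarrow> a \<otimes>\<^bsub>M\<^esub> b = a \<otimes>\<^bsub>A\<^esub> lam a b"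
  by (simp add: blambda_def)

lemma A_as_M: "y \<in> carrier A \<Longrightarrow> s \<in> carrier A \<Longrightarrow> y \<otimes>\<^bsub>A\<^esub> s = y \<otimes>\<^bsub>M\<^esub> lam (inv\<^bsub>M\<^esub> y) s"
  by (simp add: M_as_A)

end


inductive_set psum :: "'a monoid \<Rightarrow> 'a set \<Rightarrow> 'a set" for A Y where
  p0: "\<one>\<^bsub>A\<^esub> \<in> psum A Y"
| pS: "y \<in> Y \<Longrightarrow> s \<in> psum A Y \<Longrightarrow> y \<otimes>\<^bsub>A\<^esub> s \<in> psum A Y"

context SB begin

definition qclosed :: "'a set \<Rightarrow> bool" where
  "qclosed S \<longleftrightarrow> (\<forall>x\<in>S. \<forall>y\<in>S. sb_dot A M x y \<in> S \<and> sb_col A M x y \<in> S)"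

definition TT :: "'a set \<Rightarrow> 'a set" where
  "TT Y = {a \<in> carrier A. lam a ` Y = Y \<and> del a ` Y = Y}"

lemma TT_one: "Y \<subseteq> carrier A \<Longrightarrow> \<one>\<^bsub>A\<^esub> \<in> TT Y"
proof -
  assume Y: "Y \<subseteq> carrier A"
  have "lam \<one>\<^bsub>A\<^esub> ` Y = (\<lambda>y. y) ` Y" by (rule image_cong) (use Y in auto)
  moreover have "del \<one>\<^bsub>A\<^esub> ` Y = (\<lambda>y. y) ` Y" by (rule image_cong) (use Y in auto)
  ultimately show ?thesis by (simp add: TT_def)
qed

lemma lam_img_comp: "Y \<subseteq> carrier A \<Longrightarrow> a \<in> carrier A \<Longrightarrow> b \<in> carrier A \<Longrightarrow>
   lam (a \<otimes>\<^bsub>M\<^esub> b) ` Y = lam a ` lam b ` Y"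
  unfolding image_image by (rule image_cong) (auto simp: lam_comp)
lemma del_img_comp: "Y \<subseteq> carrier A \<Longrightarrow> a \<in> carrier A \<Longrightarrow> b \<in> carrier A \<Longrightarrow>
   del (a \<otimes>\<^bsub>M\<^esub> b) ` Y = del a ` del b ` Y"
  unfolding image_image by (rule image_cong) (auto simp: del_comp)

lemma TT_mult: "Y \<subseteq> carrier A \<Longrightarrow> a \<in> TT Y \<Longrightarrow> b \<in> TT Y \<Longrightarrow> a \<otimes>\<^bsub>M\<^esub> b \<in> TT Y"
  unfolding TT_def by (simp add: lam_img_comp del_img_comp)

lemma TT_inv: "Y \<subseteq> carrier A \<Longrightarrow> a \<in> TT Y \<Longrightarrow> inv\<^bsub>M\<^esub> a \<in> TT Y"
proof -
  assume Y: "Y \<subseteq> carrier A" and a: "a \<in> TT Y"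
  then have ac: "a \<in> carrier A" and l: "lam a ` Y = Y" and d: "del a ` Y = Y" by (auto simp: TT_def)
  have "lam (inv\<^bsub>M\<^esub> a) ` Y = lam (inv\<^bsub>M\<^esub> a) ` lam a ` Y" using l by simp
  also have "\<dots> = (\<lambda>y. lam (inv\<^bsub>M\<^esub> a) (lam a y)) ` Y" by (simp add: image_image)
  also have "\<dots> = (\<lambda>y. y) ` Y" by (rule image_cong) (use Y ac in auto)
  finally have 1: "lam (inv\<^bsub>M\<^esub> a) ` Y = Y" by simp
  have "del (inv\<^bsub>M\<^esub> a) ` Y = del (inv\<^bsub>M\<^esub> a) ` del a ` Y" using d by simp
  also have "\<dots> = (\<lambda>y. del (inv\<^bsub>M\<^esub> a) (del a y)) ` Y" by (simp add: image_image)
  also have "\<dots> = (\<lambda>y. y) ` Y" by (rule image_cong) (use Y ac in auto)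
  finally have 2: "del (inv\<^bsub>M\<^esub> a) ` Y = Y" by simp
  show ?thesis using 1 2 ac by (simp add: TT_def)
qed

lemma endo_eq: "finite Y \<Longrightarrow> Y \<subseteq> carrier A \<Longrightarrow> f ` Y \<subseteq> Y \<Longrightarrow>
  (\<And>b c. b \<in> carrier A \<Longrightarrow> c \<in> carrier A \<Longrightarrow> f b = f c \<Longrightarrow> b = c) \<Longrightarrow> f ` Y = Y"
proof -
  assume fin: "finite Y" and Y: "Y \<subseteq> carrier A" and im: "f ` Y \<subseteq> Y"
    and inj: "\<And>b c. b \<in> carrier A \<Longrightarrow> c \<in> carrier A \<Longrightarrow> f b = f c \<Longrightarrow> b = c"
  have "inj_on f Y" unfolding inj_on_def using inj Y by blast
  then show "f ` Y = Y" using endo_inj_surj fin im by blast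
qed

lemma Y_in_TT:
  assumes fin: "finite Y" and Y: "Y \<subseteq> carrier A" and qc: "qclosed Y" and y: "y \<in> Y"
  shows "y \<in> TT Y"
proof -
  have yc: "y \<in> carrier A" using y Y by blast
  have "lam (inv\<^bsub>M\<^esub> y) ` Y \<subseteq> Y" using qc y unfolding qclosed_def sb_dot_def by blast
  then have 1: "lam (inv\<^bsub>M\<^esub> y) ` Y = Y"
    by (rule endo_eq[OF fin Y]) (rule lam_inj[of "inv\<^bsub>M\<^esub> y"], use yc in simp_all)
  have "del (inv\<^bsub>M\<^esub> y) ` Y \<subseteq> Y" using qc y unfolding qclosed_def sb_col_def by blast
  then have 2: "del (inv\<^bsub>M\<^esub> y) ` Y = Y"
    by (rule endo_eq[OF fin Y]) (rule del_inj[of "inv\<^bsub>M\<^esub> y"], use yc in simp_all)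
  have "inv\<^bsub>M\<^esub> y \<in> TT Y" using 1 2 yc by (simp add: TT_def)
  then have "inv\<^bsub>M\<^esub> (inv\<^bsub>M\<^esub> y) \<in> TT Y" using TT_inv Y by blast
  then show ?thesis using yc carrM by simp
qed

lemma psum_carr: assumes "Y \<subseteq> carrier A" shows "s \<in> psum A Y \<Longrightarrow> s \<in> carrier A"
  by (induction rule: psum.induct) (use assms in auto)

lemma psum_lam: assumes Y: "Y \<subseteq> carrier A" and aT: "a \<in> TT Y" shows "s \<in> psum A Y \<Longrightarrow> lam a s \<in> psum A Y"
proof (induction rule: psum.induct)
  case p0 then show ?case using aT by (simp add: TT_def psum.p0)
next
  case (pS y s)
  have ac: "a \<in> carrier A" and l: "lam a ` Y = Y" using aT by (auto simp: TT_def)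
  have "lam a (y \<otimes>\<^bsub>A\<^esub> s) = lam a y \<otimes>\<^bsub>A\<^esub> lam a s"
    using pS ac lam_mult psum_carr[OF Y] Y by blast
  moreover have "lam a y \<in> Y" using l pS by blast
  ultimately show ?case using pS psum.pS by auto
qed

lemma psum_mult: assumes Y: "Y \<subseteq> carrier A" and t: "t \<in> psum A Y"
  shows "s \<in> psum A Y \<Longrightarrow> s \<otimes>\<^bsub>A\<^esub> t \<in> psum A Y"
proof (induction rule: psum.induct)
  case p0 then show ?case using psum_carr[OF Y t] t by simp
next
  case (pS y s)
  have "y \<otimes>\<^bsub>A\<^esub> s \<otimes>\<^bsub>A\<^esub> t = y \<otimes>\<^bsub>A\<^esub> (s \<otimes>\<^bsub>A\<^esub> t)"
    using GA.m_assoc psum_carr[OF Y t] psum_carr[OF Y pS(2)] pS(1) Y by blast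
  then show ?case using psum.pS[OF pS(1) pS(3)] by simp
qed

lemma psum_main:
  assumes fin: "finite Y" and Y: "Y \<subseteq> carrier A" and qc: "qclosed Y"
  shows "s \<in> psum A Y \<Longrightarrow> \<forall>a\<in>TT Y. lam a s \<in> TT Y \<and> (\<forall>p\<in>psum A Y. lam a s \<otimes>\<^bsub>M\<^esub> p \<in> psum A Y)"
proof (induction rule: psum.induct)
  case p0
  then show ?case using TT_one[OF Y] by (auto simp: TT_def psum_carr[OF Y])
next
  case (pS y s)
  show ?case
  proof
    fix a assume a: "a \<in> TT Y"
    then have ac: "a \<in> carrier A" and l: "lam a ` Y = Y" by (auto simp: TT_def)
    have yc: "y \<in> carrier A" using pS Y by blast
    have sc: "s \<in> carrier A" using pS psum_carr[OF Y] by blast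
    define y' where "y' = lam a y"
    have y'Y: "y' \<in> Y" using l pS y'_def by blast
    have y'c: "y' \<in> carrier A" using y'Y Y by blast
    have y'T: "y' \<in> TT Y" using Y_in_TT[OF fin Y qc y'Y] .
    define b where "b = inv\<^bsub>M\<^esub> y' \<otimes>\<^bsub>M\<^esub> a"
    have bT: "b \<in> TT Y" unfolding b_def using TT_mult[OF Y TT_inv[OF Y y'T] a] .
    have IH: "lam b s \<in> TT Y" "\<And>p. p \<in> psum A Y \<Longrightarrow> lam b s \<otimes>\<^bsub>M\<^esub> p \<in> psum A Y"
      using pS.IH bT by auto
    have eq: "lam a (y \<otimes>\<^bsub>A\<^esub> s) = y' \<otimes>\<^bsub>M\<^esub> lam b s"
    proof -
      have "lam a (y \<otimes>\<^bsub>A\<^esub> s) = y' \<otimes>\<^bsub>A\<^esub> lam a s" using lam_mult ac yc sc y'_def by blast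
      also have "\<dots> = y' \<otimes>\<^bsub>M\<^esub> lam (inv\<^bsub>M\<^esub> y') (lam a s)" using A_as_M y'c ac sc by simp
      also have "\<dots> = y' \<otimes>\<^bsub>M\<^esub> lam b s" using lam_comp y'c ac sc b_def by simp
      finally show ?thesis .
    qed
    have lbc: "lam b s \<in> carrier A" using IH(1) by (simp add: TT_def)
    show "lam a (y \<otimes>\<^bsub>A\<^esub> s) \<in> TT Y \<and> (\<forall>p\<in>psum A Y. lam a (y \<otimes>\<^bsub>A\<^esub> s) \<otimes>\<^bsub>M\<^esub> p \<in> psum A Y)"
    proof
      show "lam a (y \<otimes>\<^bsub>A\<^esub> s) \<in> TT Y" using eq TT_mult[OF Y y'T IH(1)] by simp
      show "\<forall>p\<in>psum A Y. lam a (y \<otimes>\<^bsub>A\<^esub> s) \<otimes>\<^bsub>M\<^esub> p \<in> psum A Y"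
      proof
        fix p assume p: "p \<in> psum A Y"
        have pc: "p \<in> carrier A" using p psum_carr[OF Y] by blast
        have q: "lam b s \<otimes>\<^bsub>M\<^esub> p \<in> psum A Y" using IH(2) p .
        have "lam a (y \<otimes>\<^bsub>A\<^esub> s) \<otimes>\<^bsub>M\<^esub> p = y' \<otimes>\<^bsub>M\<^esub> (lam b s \<otimes>\<^bsub>M\<^esub> p)"
          using eq M_assoc y'c lbc pc by simp
        also have "\<dots> = y' \<otimes>\<^bsub>A\<^esub> lam y' (lam b s \<otimes>\<^bsub>M\<^esub> p)" using M_as_A y'c lbc pc by simp
        finally show "lam a (y \<otimes>\<^bsub>A\<^esub> s) \<otimes>\<^bsub>M\<^esub> p \<in> psum A Y"
          using psum.pS[OF y'Y psum_lam[OF Y y'T q]] by simp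
      qed
    qed
  qed
qed

end


locale SBX = SB +
  fixes X :: "'a set"
  assumes fin: "finite (carrier A)"
    and subX: "sub_qcs (carrier A) (sb_dot A M) (sb_col A M) X"
    and ind: "qcs_indecomposable X (sb_dot A M) (sb_col A M)"
begin

abbreviation dt where "dt \<equiv> sb_dot A M"
abbreviation cl where "cl \<equiv> sb_col A M"

lemma qX: "q_cycle_set X dt cl" using ind unfolding qcs_indecomposable_def by blast
lemma Xc: "X \<subseteq> carrier A" using subX unfolding sub_qcs_def by blast
lemma finX: "finite X" using Xc fin finite_subset by blast
lemma qcX: "qclosed X" using qX unfolding q_cycle_set_def qclosed_def by blast

lemma dt_eq: "dt u v = lam (inv\<^bsub>M\<^esub> u) v" by (simp add: sb_dot_def)
lemma cl_eq: "cl u v = del (inv\<^bsub>M\<^esub> u) v" by (simp add: sb_col_def)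

lemma sub_of_closed:
  assumes S: "S \<subseteq> X" and qc: "qclosed S"
  shows "sub_qcs X dt cl S"
proof (cases "S = {}")
  case True then show ?thesis by (simp add: sub_qcs_def)
next
  case False
  have Sc: "S \<subseteq> carrier A" using S Xc by blast
  have finS: "finite S" using S finX finite_subset by blast
  have bij: "bij_betw (dt u) S S" if u: "u \<in> S" for u
  proof -
    have uc: "u \<in> carrier A" using u Sc by blast
    have im: "dt u ` S \<subseteq> S" using qc u unfolding qclosed_def by blast
    have inj: "inj_on (dt u) S"
    proof (rule inj_onI)
      fix b c assume b: "b \<in> S" and c: "c \<in> S" and e: "dt u b = dt u c"
      show "b = c" using lam_inj[of "inv\<^bsub>M\<^esub> u" b c] e b c Sc uc by (auto simp: dt_eq)
    qed
    have "dt u ` S = S" using endo_inj_surj[OF finS im inj] .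
    then show ?thesis using inj by (simp add: bij_betw_def)
  qed
  have ids: "\<forall>x\<in>S. \<forall>y\<in>S. \<forall>z\<in>S.
        dt (dt x y) (dt x z) = dt (cl y x) (dt y z) \<and>
        cl (cl x y) (cl x z) = cl (dt y x) (cl y z) \<and>
        cl (dt x y) (dt x z) = dt (cl y x) (cl y z)"
    using qX S unfolding q_cycle_set_def by blast
  have "q_cycle_set S dt cl" unfolding q_cycle_set_def
    using False qc bij ids unfolding qclosed_def by blast
  then show ?thesis using S by (simp add: sub_qcs_def)
qed

lemma step_c: "(u, v) \<in> cb_step A M \<Longrightarrow> u \<in> carrier A \<and> v \<in> carrier A"
  unfolding cb_step_def by blast

lemma decomp:
  assumes OX: "Ob \<subseteq> X" and ne: "Ob \<noteq> {}"
    and clo: "\<And>u v. u \<in> Ob \<Longrightarrow> (u, v) \<in> cb_step A M \<Longrightarrow> v \<in> Ob"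
  shows "Ob = X"
proof (rule ccontr)
  assume neq: "Ob \<noteq> X"
  define Z where "Z = X - Ob"
  have Zne: "Z \<noteq> {}" using neq OX Z_def by blast
  have qO: "qclosed Ob" unfolding qclosed_def
  proof (intro ballI conjI)
    fix u v assume u: "u \<in> Ob" and v: "v \<in> Ob"
    have uc: "u \<in> carrier A" and vc: "v \<in> carrier A" using u v OX Xc by blast+
    have "(v, dt u v) \<in> cb_step A M"
        using uc vc Mi[OF uc] lam_c[OF Mi[OF uc] vc] unfolding cb_step_def dt_eq by blast
    then show "dt u v \<in> Ob" using clo v by blast
    have "(v, cl u v) \<in> cb_step A M"
        using uc vc Mi[OF uc] del_c[OF Mi[OF uc] vc] unfolding cb_step_def cl_eq by blast
    then show "sb_col A M u v \<in> Ob" using clo v by blast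
  qed
  have qZ: "qclosed Z" unfolding qclosed_def
  proof (intro ballI conjI)
    fix u v assume u: "u \<in> Z" and v: "v \<in> Z"
    have uc: "u \<in> carrier A" and vc: "v \<in> carrier A" using u v Z_def Xc by blast+
    have inX: "dt u v \<in> X" "cl u v \<in> X" using qcX u v Z_def unfolding qclosed_def by blast+
    show "dt u v \<in> Z"
    proof (rule ccontr)
      assume "dt u v \<notin> Z"
      then have o: "dt u v \<in> Ob" using inX Z_def by blast
      have "(dt u v, v) \<in> cb_step A M"
        using uc vc Mi[OF uc] lam_c[OF Mi[OF uc] vc] unfolding cb_step_def dt_eq by blast
      then have "v \<in> Ob" using clo o by blast
      then show False using v Z_def by blast
    qed
    show "cl u v \<in> Z"
    proof (rule ccontr)
      assume "cl u v \<notin> Z"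
      then have o: "cl u v \<in> Ob" using inX Z_def by blast
      have "(cl u v, v) \<in> cb_step A M"
        using uc vc Mi[OF uc] del_c[OF Mi[OF uc] vc] unfolding cb_step_def cl_eq by blast
      then have "v \<in> Ob" using clo o by blast
      then show False using v Z_def by blast
    qed
  qed
  have s1: "sub_qcs X dt cl Ob" using sub_of_closed[OF OX qO] .
  have s2: "sub_qcs X dt cl Z" using sub_of_closed[OF _ qZ] Z_def by blast
  have dj: "Ob \<inter> Z = {}" "Ob \<union> Z = X" using OX Z_def by auto
  have "\<exists>Y Z. Y \<noteq> {} \<and> Z \<noteq> {} \<and> Y \<inter> Z = {} \<and> Y \<union> Z = X \<and>
            sub_qcs X dt cl Y \<and> sub_qcs X dt cl Z"
    apply (rule exI[of _ Ob], rule exI[of _ Z]) using ne Zne dj s1 s2 by simp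
  then show False using ind unfolding qcs_indecomposable_def by simp
qed

end


context SBX begin

abbreviation G where "G x \<equiv> qcs_gen X dt cl {x}"

lemma G_sub: "S \<subseteq> X \<Longrightarrow> qclosed S \<Longrightarrow> x \<in> S \<Longrightarrow> G x \<subseteq> S"
  unfolding qcs_gen_def by (rule Inter_lower) (simp add: sub_of_closed)

lemma G_X: "x \<in> X \<Longrightarrow> G x \<subseteq> X" using G_sub[OF order.refl qcX] .

lemma x_G: "x \<in> G x" unfolding qcs_gen_def by blast

lemma qG: "qclosed (G x)"
  unfolding qclosed_def
proof (intro ballI conjI)
  fix u v assume u: "u \<in> G x" and v: "v \<in> G x"
  have "dt u v \<in> Z \<and> cl u v \<in> Z" if Z: "Z \<in> {Y. sub_qcs X dt cl Y \<and> {x} \<subseteq> Y}" for Z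
  proof -
    have q: "q_cycle_set Z dt cl" using Z unfolding sub_qcs_def by blast
    have uZ: "u \<in> Z" using InterD[OF u[unfolded qcs_gen_def] Z] .
    have vZ: "v \<in> Z" using InterD[OF v[unfolded qcs_gen_def] Z] .
    have "\<forall>x\<in>Z. \<forall>y\<in>Z. dt x y \<in> Z \<and> cl x y \<in> Z" using q unfolding q_cycle_set_def by blast
    then show ?thesis using uZ vZ by blast
  qed
  then show "dt u v \<in> G x" "cl u v \<in> G x" unfolding qcs_gen_def by (blast intro: InterI)+
qed

lemma G_subqcs: "x \<in> X \<Longrightarrow> sub_qcs X dt cl (G x)"
  using sub_of_closed[OF G_X qG] .

lemma ssb_closed:
  assumes C: "sub_skew_brace A M C" shows "qclosed (C \<inter> X)"
  unfolding qclosed_def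
proof (intro ballI conjI)
  fix u v assume u: "u \<in> C \<inter> X" and v: "v \<in> C \<inter> X"
  have CA: "subgroup C A" and CM: "subgroup C M" using C unfolding sub_skew_brace_def by auto
  have uC: "u \<in> C" and vC: "v \<in> C" using u v by auto
  have iu: "inv\<^bsub>M\<^esub> u \<in> C" by (rule subgroup.m_inv_closed[OF CM uC])
  have i2: "inv\<^bsub>A\<^esub> (inv\<^bsub>M\<^esub> u) \<in> C" by (rule subgroup.m_inv_closed[OF CA iu])
  have m: "inv\<^bsub>M\<^esub> u \<otimes>\<^bsub>M\<^esub> v \<in> C" by (rule subgroup.m_closed[OF CM iu vC])
  have "dt u v \<in> C" unfolding dt_eq blambda_def by (rule subgroup.m_closed[OF CA i2 m])
  moreover have "dt u v \<in> X" using qcX u v unfolding qclosed_def by blast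
  ultimately show "dt u v \<in> C \<inter> X" by blast
  have "cl u v \<in> C" unfolding cl_eq bdelta_def by (rule subgroup.m_closed[OF CA m i2])
  moreover have "cl u v \<in> X" using qcX u v unfolding qclosed_def by blast
  ultimately show "cl u v \<in> C \<inter> X" by blast
qed

lemma carr_ssb: "sub_skew_brace A M (carrier A)"
  unfolding sub_skew_brace_def using GA.subgroup_self GM.subgroup_self carrM by simp

lemma part1_back:
  assumes x: "x \<in> X" and t: "transitive_cycle_base A M X" and g: "G x = X"
  shows "sub_skew_brace_gen A M x = carrier A"
proof
  show "sub_skew_brace_gen A M x \<subseteq> carrier A"
    unfolding sub_skew_brace_gen_def by (rule Inter_lower) (use carr_ssb x Xc in blast)
  show "carrier A \<subseteq> sub_skew_brace_gen A M x"
    unfolding sub_skew_brace_gen_def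
  proof (rule Inter_greatest)
    fix C assume "C \<in> {C. sub_skew_brace A M C \<and> x \<in> C}"
    then have C: "sub_skew_brace A M C" and xC: "x \<in> C" by auto
    have "G x \<subseteq> C \<inter> X" using G_sub[OF _ ssb_closed[OF C]] xC x by blast
    then have "X \<subseteq> C" using g by blast
    then have "generate A X \<subseteq> C" using GA.generate_subgroup_incl C unfolding sub_skew_brace_def by blast
    then show "carrier A \<subseteq> C" using t unfolding transitive_cycle_base_def by simp
  qed
qed

end


context SBX begin

lemma part1_fwd:
  assumes x: "x \<in> X" and sbg: "sub_skew_brace_gen A M x = carrier A"
  shows "transitive_cycle_base A M X \<and> G x = X"
proof -
  define Y where "Y = G x"
  have YX: "Y \<subseteq> X" unfolding Y_def using G_X[OF x] .
  have Yc: "Y \<subseteq> carrier A" using YX Xc by (rule order.trans)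
  have finY: "finite Y" using YX finX finite_subset by blast
  have qY: "qclosed Y" unfolding Y_def by (rule qG)
  have xY: "x \<in> Y" unfolding Y_def by (rule x_G)
  define P where "P = psum A Y"
  have Pc: "P \<subseteq> carrier A" unfolding P_def using psum_carr[OF Yc] by blast
  have PT: "s \<in> TT Y \<and> (\<forall>p\<in>P. s \<otimes>\<^bsub>M\<^esub> p \<in> P)" if s: "s \<in> P" for s
  proof -
    have sc: "s \<in> carrier A" using s Pc by blast
    have "lam \<one>\<^bsub>A\<^esub> s \<in> TT Y \<and> (\<forall>p\<in>psum A Y. lam \<one>\<^bsub>A\<^esub> s \<otimes>\<^bsub>M\<^esub> p \<in> psum A Y)"
      using psum_main[OF finY Yc qY, of s] s TT_one[OF Yc] unfolding P_def by blast
    then show ?thesis using sc unfolding P_def by simp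
  qed
  have subA: "subgroup P A"
    by (rule GA.fin_closed_subgroup[OF fin Pc]) (simp_all add: P_def psum.p0 psum_mult[OF Yc])
  have subM: "subgroup P M"
  proof (rule GM.fin_closed_subgroup)
    show "finite (carrier M)" using fin carrM by simp
    show "P \<subseteq> carrier M" using Pc carrM by simp
    show "\<one>\<^bsub>M\<^esub> \<in> P" unfolding one_eq P_def by (rule psum.p0)
    show "a \<otimes>\<^bsub>M\<^esub> b \<in> P" if "a \<in> P" "b \<in> P" for a b using PT that by blast
  qed
  have xc: "x \<in> carrier A" using x Xc by blast
  have xP: "x \<in> P"
  proof -
    have "x \<otimes>\<^bsub>A\<^esub> \<one>\<^bsub>A\<^esub> \<in> P" unfolding P_def by (rule psum.pS[OF xY psum.p0])
    then show ?thesis using xc by simp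
  qed
  have "sub_skew_brace_gen A M x \<subseteq> P" unfolding sub_skew_brace_gen_def
    by (rule Inter_lower) (simp add: sub_skew_brace_def subA subM xP)
  then have carrP: "carrier A \<subseteq> P" using sbg by simp
  have allT: "a \<in> TT Y" if "a \<in> carrier A" for a using PT carrP that by blast
  have stepY: "v \<in> Y" if u: "u \<in> Y" and st: "(u, v) \<in> cb_step A M" for u v
  proof -
    have uc: "u \<in> carrier A" and vc: "v \<in> carrier A" using st unfolding cb_step_def by blast+
    obtain c where c: "c \<in> carrier A" and
      cs: "v = lam c u \<or> v = del c u \<or> u = lam c v \<or> u = del c v"
      using st unfolding cb_step_def by blast
    have l: "lam c ` Y = Y" and d: "del c ` Y = Y" using allT[OF c] unfolding TT_def by blast+
    from cs show ?thesis
    proof (elim disjE)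
      assume "v = lam c u" then show ?thesis using l u by blast
    next
      assume "v = del c u" then show ?thesis using d u by blast
    next
      assume e: "u = lam c v"
      then obtain w where w: "w \<in> Y" "lam c v = lam c w" using l u by (metis imageE)
      then have "v = w" using lam_inj[OF c vc] Yc by blast
      then show ?thesis using w by simp
    next
      assume e: "u = del c v"
      then obtain w where w: "w \<in> Y" "del c v = del c w" using d u by (metis imageE)
      then have "v = w" using del_inj[OF c vc] Yc by blast
      then show ?thesis using w by simp
    qed
  qed
  define Ob where "Ob = cb_orbit A M x"
  have ObY: "Ob \<subseteq> Y"
  proof
    fix v assume "v \<in> Ob"
    then have "(x, v) \<in> (cb_step A M)\<^sup>*" unfolding Ob_def cb_orbit_def by simp
    then show "v \<in> Y"
    proof (induction rule: rtrancl_induct)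
      case base then show ?case using xY .
    next
      case (step y z) then show ?case using stepY by blast
    qed
  qed
  have ObX: "Ob = X"
  proof (rule decomp)
    show "Ob \<subseteq> X" using ObY YX by (rule order.trans)
    show "Ob \<noteq> {}" unfolding Ob_def cb_orbit_def by blast
    show "v \<in> Ob" if "u \<in> Ob" "(u, v) \<in> cb_step A M" for u v
      using that unfolding Ob_def cb_orbit_def by (simp add: rtrancl_into_rtrancl)
  qed
  have YeX: "Y = X" using ObX ObY YX by blast
  have "P \<subseteq> generate A Y"
  proof
    fix s assume "s \<in> P"
    then show "s \<in> generate A Y" unfolding P_def
    proof (induction rule: psum.induct)
      case p0 then show ?case by (rule generate.one)
    next
      case (pS y s) then show ?case by (simp add: generate.eng generate.incl)
    qed
  qed
  then have "generate A X = carrier A"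
    using carrP YeX GA.generate_incl[OF Xc] by blast
  then have "transitive_cycle_base A M X"
    unfolding transitive_cycle_base_def using xc ObX Ob_def by blast
  then show ?thesis using YeX Y_def by simp
qed

end


theorem mainTheorem1:
  fixes A M :: "'a monoid" and X :: "'a set"
  assumes "skew_brace A M"
    and "finite (carrier A)"
    and "sub_qcs (carrier A) (sb_dot A M) (sb_col A M) X"
    and "qcs_indecomposable X (sb_dot A M) (sb_col A M)"
  shows "(\<forall>x\<in>X. sub_skew_brace_gen A M x = carrier A \<longleftrightarrow>
             transitive_cycle_base A M X \<and> qcs_gen X (sb_dot A M) (sb_col A M) {x} = X)
       \<and> ((\<forall>x\<in>X. sub_skew_brace_gen A M x = carrier A) \<longleftrightarrow>
             transitive_cycle_base A M X \<and> qcs_irreducible X (sb_dot A M) (sb_col A M))"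
proof -
  interpret SBX A M X
    using assms by (simp add: SBX_def SBX_axioms_def SB_def)
  have p1: "\<forall>x\<in>X. sub_skew_brace_gen A M x = carrier A \<longleftrightarrow>
             transitive_cycle_base A M X \<and> qcs_gen X (sb_dot A M) (sb_col A M) {x} = X"
    using part1_fwd part1_back by blast
  have p2: "(\<forall>x\<in>X. sub_skew_brace_gen A M x = carrier A) \<longleftrightarrow>
             transitive_cycle_base A M X \<and> qcs_irreducible X (sb_dot A M) (sb_col A M)"
  proof
    assume all: "\<forall>x\<in>X. sub_skew_brace_gen A M x = carrier A"
    have ne: "X \<noteq> {}" using qX unfolding q_cycle_set_def by blast
    then obtain x0 where x0: "x0 \<in> X" by blast
    have t: "transitive_cycle_base A M X" using p1 all x0 by blast
    have "\<forall>Y. sub_qcs X dt cl Y \<longrightarrow> Y = {} \<or> Y = X"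
    proof (intro allI impI)
      fix Y assume Y: "sub_qcs X dt cl Y"
      show "Y = {} \<or> Y = X"
      proof (cases "Y = {}")
        case False
        then obtain y where y: "y \<in> Y" by blast
        have YX: "Y \<subseteq> X" using Y unfolding sub_qcs_def by blast
        have "G y \<subseteq> Y" unfolding qcs_gen_def by (rule Inter_lower) (use Y y in simp)
        moreover have "G y = X" using p1 all y YX by blast
        ultimately show ?thesis using YX by blast
      qed simp
    qed
    then show "transitive_cycle_base A M X \<and> qcs_irreducible X (sb_dot A M) (sb_col A M)"
      using t qX unfolding qcs_irreducible_def by blast
  next
    assume h: "transitive_cycle_base A M X \<and> qcs_irreducible X (sb_dot A M) (sb_col A M)"
    show "\<forall>x\<in>X. sub_skew_brace_gen A M x = carrier A"
    proof
      fix x assume x: "x \<in> X"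
      have "G x \<noteq> {}" using x_G by blast
      then have "G x = X" using h G_subqcs[OF x] unfolding qcs_irreducible_def by blast
      then show "sub_skew_brace_gen A M x = carrier A" using p1 h x by blast
    qed
  qed
  show ?thesis using p1 p2 by blast
qed

end
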